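(* Let $C$ be a normalized symmetric conference matrix of order $n\ge 6$, and let \[a=-\frac{2}{n-2}\pm i\,\frac{\sqrt{n(n-4)}}{n-2}.\] Form $C+I_n$ and, in its lower right $(n-1)\times(n-1)$ block, replace every off-diagonal entry $1$ by $a$ and every entry $-1$ by $\overline a$. The resulting matrix is a complex Hadamard matrix of order $n$ whose entries lie in $\{1,a,\overline a\}$.
   Context: A conference matrix of order $n$ is an $n\times n$ matrix $C$ with zero diagonal, off-diagonal entries in $\{1,-1\}$, and $CC^T=(n-1)I_n$; it is normalized if all off-diagonal entries of its first row and first column equal $1$. A complex Hadamard matrix of order $n$ is an $n\times n$ complex matrix with all entries of modulus $1$ satisfying $HH^\ast=nI_n$. *)

theory Defs
  imports Complex_Main
begin

text \<open>Square matrices of order n are represented as functions nat => nat => 'a,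
  with indices 0..n-1 (index 0 = first row/column).\<close>

definition conference_matrix :: "nat \<Rightarrow> (nat \<Rightarrow> nat \<Rightarrow> real) \<Rightarrow> bool" where
  "conference_matrix n C \<longleftrightarrow>
     (\<forall>i<n. C i i = 0) \<and>
     (\<forall>i<n. \<forall>j<n. i \<noteq> j \<longrightarrow> C i j = 1 \<or> C i j = -1) \<and>
     (\<forall>i<n. \<forall>j<n. (\<Sum>k<n. C i k * C j k) = (if i = j then real n - 1 else 0))"

definition normalized_conf :: "nat \<Rightarrow> (nat \<Rightarrow> nat \<Rightarrow> real) \<Rightarrow> bool" where
  "normalized_conf n C \<longleftrightarrow> (\<forall>j. 1 \<le> j \<and> j < n \<longrightarrow> C 0 j = 1 \<and> C j 0 = 1)"

definition symmetric_mat :: "nat \<Rightarrow> (nat \<Rightarrow> nat \<Rightarrow> 'a) \<Rightarrow> bool" where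
  "symmetric_mat n C \<longleftrightarrow> (\<forall>i<n. \<forall>j<n. C i j = C j i)"

definition complex_hadamard :: "nat \<Rightarrow> (nat \<Rightarrow> nat \<Rightarrow> complex) \<Rightarrow> bool" where
  "complex_hadamard n H \<longleftrightarrow>
     (\<forall>i<n. \<forall>j<n. cmod (H i j) = 1) \<and>
     (\<forall>i<n. \<forall>j<n. (\<Sum>k<n. H i k * cnj (H j k)) = (if i = j then of_nat n else 0))"

definition conf_to_hadamard :: "(nat \<Rightarrow> nat \<Rightarrow> real) \<Rightarrow> complex \<Rightarrow> nat \<Rightarrow> nat \<Rightarrow> complex" where
  "conf_to_hadamard C a i j =
     (let e = C i j + (if i = j then 1 else 0) in
      if i = 0 \<or> j = 0 then complex_of_real e
      else if i \<noteq> j \<and> e = 1 then a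
      else if e = -1 then cnj a
      else complex_of_real e)"

end

theory Submission
  imports Defs
begin

lemma sum_remove2:
  assumes "finite A" "x \<in> A" "y \<in> A" "x \<noteq> y"
  shows "sum g A = g x + g y + sum g (A - {x,y})"
proof -
  have 1: "sum g A = g x + sum g (A - {x})" by (rule sum.remove[OF assms(1,2)])
  have 2: "sum g (A - {x}) = g y + sum g (A - {x} - {y})" by (rule sum.remove) (use assms in auto)
  have 3: "A - {x} - {y} = A - {x,y}" by auto
  show ?thesis using 1 2 3 by (simp add: add.assoc)
qed

lemma sum_remove3:
  assumes "finite A" "x \<in> A" "y \<in> A" "z \<in> A" "x \<noteq> y" "x \<noteq> z" "y \<noteq> z"
  shows "sum g A = g x + g y + g z + sum g (A - {x,y,z})"
proof -
  have 1: "sum g A = g x + g y + sum g (A - {x,y})" by (rule sum_remove2) (use assms in auto)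
  have 2: "sum g (A - {x,y}) = g z + sum g (A - {x,y} - {z})" by (rule sum.remove) (use assms in auto)
  have 3: "A - {x,y} - {z} = A - {x,y,z}" by auto
  show ?thesis using 1 2 3 by (simp add: add.assoc)
qed

lemma sum_split_c:
  "(\<Sum>k\<in>R. complex_of_real (f k) + \<i> * complex_of_real (g k))
     = complex_of_real (sum f R) + \<i> * complex_of_real (sum g R)"
  by (simp add: sum.distrib sum_distrib_left)

theorem proposition3:
  fixes n :: nat and C :: "nat \<Rightarrow> nat \<Rightarrow> real" and a :: complex and s :: real
  assumes "n \<ge> 6"
    and "conference_matrix n C" and "normalized_conf n C" and "symmetric_mat n C"
    and "s = 1 \<or> s = -1"
    and "a = Complex (- 2 / (real n - 2)) (s * sqrt (real n * (real n - 4)) / (real n - 2))"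
  shows "complex_hadamard n (conf_to_hadamard C a)
         \<and> (\<forall>i<n. \<forall>j<n. conf_to_hadamard C a i j \<in> {1, a, cnj a})"
proof -
  define r where "r = - 2 / (real n - 2)"
  define t where "t = s * sqrt (real n * (real n - 4)) / (real n - 2)"
  have a_eq: "a = of_real r + \<i> * of_real t" using assms(6) by (simp add: r_def t_def Complex_eq)
  have n2: "real n - 2 > 0" using assms(1) by simp
  have s2: "s^2 = 1" using assms(5) by auto
  have sq: "(sqrt (real n * (real n - 4)))^2 = real n * (real n - 4)" using assms(1) by simp
  have rt: "r^2 + t^2 = 1"
  proof -
    have "r^2 + t^2 = (4 + s^2 * (real n * (real n - 4))) / (real n - 2)^2"
      by (simp add: r_def t_def power_divide power_mult_distrib sq add_divide_distrib)
    also have "\<dots> = 1"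
    proof -
      have "(real n - 2)^2 = 4 + s^2 * (real n * (real n - 4))" by (simp add: s2 power2_eq_square algebra_simps)
        (simp add: s2 mult.assoc[symmetric] power2_eq_square[symmetric])
      then show ?thesis using n2 by (metis div_self power_not_zero less_irrefl)
    qed
    finally show ?thesis .
  qed
  have r2: "2 + (real n - 2) * r = 0" using n2 by (simp add: r_def field_simps)
  from assms(2) have C0: "\<forall>i<n. C i i = 0" and C1: "\<forall>i<n. \<forall>j<n. i\<noteq>j \<longrightarrow> C i j = 1 \<or> C i j = -1"
    and Corth: "\<forall>i<n. \<forall>j<n. (\<Sum>k<n. C i k * C j k) = (if i = j then real n - 1 else 0)"
    unfolding conference_matrix_def by auto
  have N: "\<forall>j. 1 \<le> j \<and> j < n \<longrightarrow> C 0 j = 1 \<and> C j 0 = 1" using assms(3) unfolding normalized_conf_def .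
  have Sym: "\<forall>i<n. \<forall>j<n. C i j = C j i" using assms(4) unfolding symmetric_mat_def .
  define H where "H = conf_to_hadamard C a"
  have Hform: "H i k = (if i = 0 \<or> k = 0 \<or> k = i then 1 else of_real r + \<i> * of_real (t * C i k))"
    if "i < n" "k < n" for i k
  proof (cases "i = 0 \<or> k = 0 \<or> k = i")
    case True
    then show ?thesis using that C0 N by (auto simp: H_def conf_to_hadamard_def Let_def)
  next
    case False
    then have "C i k = 1 \<or> C i k = -1" using C1 that by auto
    then show ?thesis using False by (auto simp: H_def conf_to_hadamard_def Let_def a_eq complex_eq_iff)
  qed
  have rowsum: "(\<Sum>k<n. C i k) = 1" if "1 \<le> i" "i < n" for i
  proof -
    have e1: "(\<Sum>k<n. C i k) = C i 0 + (\<Sum>k\<in>{..<n}-{0}. C i k)" by (rule sum.remove) (use that in auto)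
    have e2: "(\<Sum>k<n. C 0 k * C i k) = C 0 0 * C i 0 + (\<Sum>k\<in>{..<n}-{0}. C 0 k * C i k)"
      by (rule sum.remove) (use that in auto)
    have e3: "(\<Sum>k\<in>{..<n}-{0}. C 0 k * C i k) = (\<Sum>k\<in>{..<n}-{0}. C i k)" by (rule sum.cong) (use N in auto)
    have "(\<Sum>k<n. C 0 k * C i k) = 0" using Corth that by auto
    then show ?thesis using e1 e2 e3 C0 N that by auto
  qed
  have Hrow: "(\<Sum>k<n. H i k) = 0" if "1 \<le> i" "i < n" for i
  proof -
    let ?R = "{..<n} - {0, i}"
    have A: "(\<Sum>k<n. H i k) = H i 0 + H i i + (\<Sum>k\<in>?R. H i k)" by (rule sum_remove2) (use that in auto)
    have B: "(\<Sum>k<n. C i k) = C i 0 + C i i + (\<Sum>k\<in>?R. C i k)" by (rule sum_remove2) (use that in auto)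
    have BR: "(\<Sum>k\<in>?R. C i k) = 0" using B rowsum[OF that] C0 N that by auto
    have cR: "card ?R = n - 2" using that by (simp add: card_Diff_subset)
    have "(\<Sum>k\<in>?R. H i k) = (\<Sum>k\<in>?R. of_real r + \<i> * of_real (t * C i k))" by (rule sum.cong) (use Hform that in auto)
    also have "\<dots> = of_real (\<Sum>k\<in>?R. r) + \<i> * of_real (\<Sum>k\<in>?R. t * C i k)" by (rule sum_split_c)
    also have "\<dots> = of_real ((real n - 2) * r)"
      using BR cR assms(1) by (simp add: sum_distrib_left[symmetric] of_nat_diff)
    finally have "(\<Sum>k<n. H i k) = of_real (2 + (real n - 2) * r)" using A Hform that by simp
    then show ?thesis using r2 by simp
  qed
  have Hmod: "cmod (H i k) = 1" if "i < n" "k < n" for i k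
  proof (cases "i = 0 \<or> k = 0 \<or> k = i")
    case True then show ?thesis using Hform[OF that] by simp
  next
    case False
    then have c: "C i k = 1 \<or> C i k = -1" using C1 that by auto
    have "cmod (H i k) = sqrt (r^2 + (t * C i k)^2)" using Hform[OF that] False by (simp add: cmod_def)
    also have "\<dots> = 1" using c rt by auto
    finally show ?thesis .
  qed
  have Hmem: "H i k \<in> {1, a, cnj a}" if "i < n" "k < n" for i k
  proof (cases "i = 0 \<or> k = 0 \<or> k = i")
    case True then show ?thesis using Hform[OF that] by simp
  next
    case False
    then have c: "C i k = 1 \<or> C i k = -1" using C1 that by auto
    then show ?thesis using Hform[OF that] False by (auto simp: a_eq complex_eq_iff)
  qed
  have Horth: "(\<Sum>k<n. H i k * cnj (H j k)) = (if i = j then of_nat n else 0)" if "i < n" "j < n" for i j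
  proof (cases "i = j")
    case True
    have "(\<Sum>k<n. H i k * cnj (H j k)) = (\<Sum>k<n. 1)"
    proof (rule sum.cong)
      fix k assume "k \<in> {..<n}"
      then have "cmod (H i k) = 1" using Hmod that by auto
      then have "complex_of_real ((cmod (H i k))^2) = 1" by simp
      then show "H i k * cnj (H j k) = 1" using True complex_norm_square[of "H i k"] by simp
    qed simp
    then show ?thesis using True by simp
  next
    case False
    consider "i = 0" | "j = 0" | "i \<noteq> 0 \<and> j \<noteq> 0" by blast
    then show ?thesis
    proof cases
      case 1
      then have j1: "1 \<le> j" using False by simp
      have "(\<Sum>k<n. H i k * cnj (H j k)) = (\<Sum>k<n. cnj (H j k))"
        by (rule sum.cong) (use Hform 1 that in auto)
      also have "\<dots> = cnj (\<Sum>k<n. H j k)" by simp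
      also have "\<dots> = 0" using Hrow[OF j1 that(2)] by simp
      finally show ?thesis using False by simp
    next
      case 2
      then have i1: "1 \<le> i" using False by simp
      have "(\<Sum>k<n. H i k * cnj (H j k)) = (\<Sum>k<n. H i k)"
        by (rule sum.cong) (use Hform 2 that in auto)
      also have "\<dots> = 0" using Hrow[OF i1 that(1)] by simp
      finally show ?thesis using False by simp
    next
      case 3
      let ?R = "{..<n} - {0, i, j}"
      have A: "(\<Sum>k<n. H i k * cnj (H j k)) = H i 0 * cnj (H j 0) + H i i * cnj (H j i) + H i j * cnj (H j j)
          + (\<Sum>k\<in>?R. H i k * cnj (H j k))" by (rule sum_remove3) (use that 3 False in auto)
      have B1: "(\<Sum>k<n. C i k) = C i 0 + C i i + C i j + (\<Sum>k\<in>?R. C i k)"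
        by (rule sum_remove3) (use that 3 False in auto)
      have B2: "(\<Sum>k<n. C j k) = C j 0 + C j i + C j j + (\<Sum>k\<in>?R. C j k)"
        by (rule sum_remove3) (use that 3 False in auto)
      have B3: "(\<Sum>k<n. C i k * C j k) = C i 0 * C j 0 + C i i * C j i + C i j * C j j + (\<Sum>k\<in>?R. C i k * C j k)"
        by (rule sum_remove3) (use that 3 False in auto)
      have i1: "1 \<le> i" "1 \<le> j" using 3 by auto
      have S1: "(\<Sum>k\<in>?R. C i k) = - C i j" using B1 rowsum[OF i1(1) that(1)] C0 N that i1 by auto
      have S2: "(\<Sum>k\<in>?R. C j k) = - C i j" using B2 rowsum[OF i1(2) that(2)] C0 N Sym that i1 by auto
      have S3: "(\<Sum>k\<in>?R. C i k * C j k) = -1" using B3 Corth C0 N that i1 False by auto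
      have cR: "card ?R = n - 3" using that 3 False by (simp add: card_Diff_subset)
      have "(\<Sum>k\<in>?R. H i k * cnj (H j k)) = (\<Sum>k\<in>?R. of_real (r^2 + t^2 * (C i k * C j k)) + \<i> * of_real (t * r * (C i k - C j k)))"
      proof (rule sum.cong)
        fix k assume k: "k \<in> ?R"
        then show "H i k * cnj (H j k) = of_real (r^2 + t^2 * (C i k * C j k)) + \<i> * of_real (t * r * (C i k - C j k))"
        proof -
          have "H i k = of_real r + \<i> * of_real (t * C i k)" "H j k = of_real r + \<i> * of_real (t * C j k)"
            using Hform[of i k] Hform[of j k] that 3 k by auto
          then show ?thesis by (simp add: complex_eq_iff power2_eq_square algebra_simps)
        qed
      qed simp
      also have "\<dots> = of_real (\<Sum>k\<in>?R. r^2 + t^2 * (C i k * C j k)) + \<i> * of_real (\<Sum>k\<in>?R. t * r * (C i k - C j k))"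
        by (rule sum_split_c)
      also have "\<dots> = of_real ((real n - 3) * r^2 - t^2)"
        using S1 S2 S3 cR assms(1) by (simp add: sum.distrib sum_subtractf sum_distrib_left[symmetric] of_nat_diff)
      finally have R: "(\<Sum>k\<in>?R. H i k * cnj (H j k)) = of_real ((real n - 3) * r^2 - t^2)" .
      have hij: "H i j = of_real r + \<i> * of_real (t * C i j)" using Hform that 3 False by auto
      have hji: "H j i = of_real r + \<i> * of_real (t * C i j)" using Hform that 3 False Sym by auto
      have "(\<Sum>k<n. H i k * cnj (H j k)) = of_real (1 + 2 * r + (real n - 3) * r^2 - t^2)"
        using A R hij hji Hform that 3 by (simp add: complex_eq_iff)
      also have "1 + 2 * r + (real n - 3) * r^2 - t^2 = r * (2 + (real n - 2) * r)"
        using rt by (simp add: algebra_simps power2_eq_square)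
      finally show ?thesis using r2 False by simp
    qed
  qed
  show ?thesis using Hmod Horth Hmem unfolding complex_hadamard_def H_def by auto
qed

end
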